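(* Let $\Omega\subset\mathbb H^n$ be an open, horizontally bounded set, $G_0\subset\Omega$ an open (Euclidean) convex set, $\xi_0\in G_0$, and $c_v<c_b\le0$. Let $V:\mathbb R^{2n+1}\to\mathbb R$ be the slicing cone with vertex $(\xi_0,c_v)$ and base $G_0\cap H_{\xi_0}$ with value $c_b$ on $\partial G_0\cap H_{\xi_0}$ (defined in the context). Then: (i) $B_{\mathbb R^{2n}}(0,r_0)\subset\partial_HV(\xi_0)$, where $r_0=\dfrac{c_b-c_v}{\mathrm{diam}_H(G_0\cap H_{\xi_0})}$; (ii) for every $p$ in the interior of $\partial_HV(\xi_0)$, $$V(\xi)>V(\xi_0)+p\cdot(\mathrm{Pr}_1(\xi)-\mathrm{Pr}_1(\xi_0))\qquad\forall\xi\in(\overline{G_0}\cap H_{\xi_0})\setminus\{\xi_0\}.$$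
   Context: $\mathbb H^n=\mathbb C^n\times\mathbb R\cong\mathbb R^{2n+1}$ with real coordinates $(x,y,t)$, $z=x+iy$, group law $(z,t)\circ(z',t')=(z+z',t+t'+2\,\mathrm{Im}\langle z,z'\rangle)$, $\langle z,z'\rangle=\sum_j z_j\overline{z'_j}$. Dilations $\delta_\lambda(z,t)=(\lambda z,\lambda^2t)$. Horizontal plane at $\xi_0=(x_0,y_0,t_0)$: $H_{\xi_0}=\{(x,y,t):t=t_0+2(x\cdot y_0-x_0\cdot y)\}$ (an affine hyperplane of $\mathbb R^{2n+1}$). $\mathrm{Pr}_1(x,y,t)=(x,y)$. Gauge $N(z,t)=(|z|^4+t^2)^{1/4}$, $d_H(\xi,\zeta)=N(\zeta^{-1}\circ\xi)$, $\mathrm{diam}_H$ the $d_H$-diameter; $\Omega$ horizontally bounded means $\sup\{\mathrm{diam}_H(\Omega\cap H_\xi):\xi\in\Omega\}<\infty$. Slicing cone: for $\eta\in H_{\xi_0}\setminus\{\xi_0\}$ let $\eta^\partial$ be the unique point of $\partial G_0\cap H_{\xi_0}$ on the horizontal ray $\{\xi_0\circ\delta_s(\xi_0^{-1}\circ\eta):s>0\}$, and let $\lambda^\eta=N(\xi_0^{-1}\circ\eta)/N(\xi_0^{-1}\circ\eta^\partial)$ (so $\eta=\xi_0\circ\delta_{\lambda^\eta}(\xi_0^{-1}\circ\eta^\partial)$); set $\lambda^{\xi_0}=0$. For $\xi\in\mathbb R^{2n+1}$ let $\xi^\perp$ be the Euclidean orthogonal projection of $\xi$ onto $H_{\xi_0}$,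 and define $V(\xi)=c_v\bigl(1-(1-\tfrac{c_b}{c_v})\lambda^{\xi^\perp}\bigr)$. Horizontal subdifferential of $V$ (restricted to $\Omega$) at $\xi_0$: $\partial_HV(\xi_0)=\{p\in\mathbb R^{2n}:V(\xi)\ge V(\xi_0)+p\cdot(\mathrm{Pr}_1(\xi)-\mathrm{Pr}_1(\xi_0))\ \forall\xi\in\Omega\cap H_{\xi_0}\}$. *)

theory Defs
  imports "HOL-Analysis.Analysis"
begin

text \<open>Points of the Heisenberg group H^n = C^n x R, written in real coordinates
  (x, y, t) with x, y in R^n; the dimension n is the cardinality of the finite type 'n.\<close>

type_synonym 'n heis = "(real^'n) \<times> (real^'n) \<times> real"

definition hmult :: "'n::finite heis \<Rightarrow> 'n heis \<Rightarrow> 'n heis" (infixl "\<circ>\<^sub>H" 70) where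
  "hmult p q = (case p of (x, y, t) \<Rightarrow> case q of (x', y', t') \<Rightarrow>
      (x + x', y + y', t + t' + 2 * (y \<bullet> x' - x \<bullet> y')))"
  \<comment> \<open>2 Im<z,z'> = 2 (y.x' - x.y') for z = x + iy, z' = x' + iy'\<close>

definition hinv :: "'n::finite heis \<Rightarrow> 'n heis" where
  "hinv p = (case p of (x, y, t) \<Rightarrow> (- x, - y, - t))"

definition hdil :: "real \<Rightarrow> 'n::finite heis \<Rightarrow> 'n heis" where
  "hdil s p = (case p of (x, y, t) \<Rightarrow> (s *\<^sub>R x, s *\<^sub>R y, s\<^sup>2 * t))"

definition gauge :: "'n::finite heis \<Rightarrow> real" where
  "gauge p = (case p of (x, y, t) \<Rightarrow> ((norm x)\<^sup>2 + (norm y)\<^sup>2)\<^sup>2 + t\<^sup>2) powr (1/4)"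

definition dH :: "'n::finite heis \<Rightarrow> 'n heis \<Rightarrow> real" where
  "dH \<xi> \<zeta> = gauge (hinv \<zeta> \<circ>\<^sub>H \<xi>)"

definition diamH :: "'n::finite heis set \<Rightarrow> real" where
  "diamH S = Sup {dH a b | a b. a \<in> S \<and> b \<in> S}"

definition hplane :: "'n::finite heis \<Rightarrow> 'n heis set" where
  "hplane \<xi>0 = {(x, y, t). t = snd (snd \<xi>0) + 2 * (x \<bullet> fst (snd \<xi>0) - fst \<xi>0 \<bullet> y)}"

definition Pr1 :: "'n::finite heis \<Rightarrow> (real^'n) \<times> (real^'n)" where
  "Pr1 p = (fst p, fst (snd p))"

definition horizontally_bounded :: "'n::finite heis set \<Rightarrow> bool" where
  "horizontally_bounded \<Omega> \<longleftrightarrow>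
     (\<exists>B. \<forall>\<xi>\<in>\<Omega>. \<forall>a\<in>\<Omega> \<inter> hplane \<xi>. \<forall>b\<in>\<Omega> \<inter> hplane \<xi>. dH a b \<le> B)"

definition bdry_pt :: "'n::finite heis set \<Rightarrow> 'n heis \<Rightarrow> 'n heis \<Rightarrow> 'n heis" where
  "bdry_pt G0 \<xi>0 \<eta> = (THE e. e \<in> frontier G0 \<inter> hplane \<xi>0 \<and>
      (\<exists>s>0. e = \<xi>0 \<circ>\<^sub>H hdil s (hinv \<xi>0 \<circ>\<^sub>H \<eta>)))"

definition slice_lambda :: "'n::finite heis set \<Rightarrow> 'n heis \<Rightarrow> 'n heis \<Rightarrow> real" where
  "slice_lambda G0 \<xi>0 \<eta> = (if \<eta> = \<xi>0 then 0
      else gauge (hinv \<xi>0 \<circ>\<^sub>H \<eta>) / gauge (hinv \<xi>0 \<circ>\<^sub>H bdry_pt G0 \<xi>0 \<eta>))"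

definition slicing_cone ::
  "'n::finite heis set \<Rightarrow> 'n heis \<Rightarrow> real \<Rightarrow> real \<Rightarrow> 'n heis \<Rightarrow> real" where
  "slicing_cone G0 \<xi>0 cv cb \<xi> =
     cv * (1 - (1 - cb / cv) * slice_lambda G0 \<xi>0 (closest_point (hplane \<xi>0) \<xi>))"

definition horiz_subdiff ::
  "'n::finite heis set \<Rightarrow> ('n heis \<Rightarrow> real) \<Rightarrow> 'n heis \<Rightarrow> ((real^'n) \<times> (real^'n)) set" where
  "horiz_subdiff \<Omega> V \<xi>0 = {p. \<forall>\<xi>\<in>\<Omega> \<inter> hplane \<xi>0.
      V \<xi> \<ge> V \<xi>0 + p \<bullet> (Pr1 \<xi> - Pr1 \<xi>0)}"

end

theory Submission
  imports Defs
begin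

lemma hplane_iff: "(x,y,t) \<in> hplane (x0,y0,t0) \<longleftrightarrow> t = t0 + 2*(x \<bullet> y0 - x0 \<bullet> y)"
  by (simp add: hplane_def)

lemma hinv_mult_hplane:
  assumes "\<eta> \<in> hplane \<xi>0"
  shows "hinv \<xi>0 \<circ>\<^sub>H \<eta> = (fst \<eta> - fst \<xi>0, fst (snd \<eta>) - fst (snd \<xi>0), 0)"
  using assms
  by (cases \<eta>; cases \<xi>0) (auto simp: hplane_def hinv_def hmult_def inner_commute algebra_simps)

lemma gauge_hor: "gauge (a, b, 0) = norm (a, b)"
proof -
  have "gauge (a,b,0) = (((norm a)\<^sup>2 + (norm b)\<^sup>2)\<^sup>2) powr (1/4)" by (simp add: gauge_def)
  also have "\<dots> = ((norm a)\<^sup>2 + (norm b)\<^sup>2) powr (2 * (1/4))"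
    by (subst powr_powr[symmetric]) (simp add: powr_realpow)
  also have "\<dots> = sqrt ((norm a)\<^sup>2 + (norm b)\<^sup>2)"
    by (simp add: powr_half_sqrt)
  finally show ?thesis by (simp add: norm_prod_def)
qed

lemma gauge_hplane:
  assumes "\<eta> \<in> hplane \<xi>0"
  shows "gauge (hinv \<xi>0 \<circ>\<^sub>H \<eta>) = norm (Pr1 \<eta> - Pr1 \<xi>0)"
  using assms by (simp add: hinv_mult_hplane gauge_hor Pr1_def)

lemma dil_hplane:
  assumes "\<eta> \<in> hplane \<xi>0"
  shows "\<xi>0 \<circ>\<^sub>H hdil s (hinv \<xi>0 \<circ>\<^sub>H \<eta>) = \<xi>0 + s *\<^sub>R (\<eta> - \<xi>0)"
proof -
  obtain a b c where e: "\<eta> = (a,b,c)" by (cases \<eta>) auto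
  obtain a0 b0 c0 where x: "\<xi>0 = (a0,b0,c0)" by (cases \<xi>0) auto
  have h: "c = c0 + 2*(a \<bullet> b0 - a0 \<bullet> b)" using assms by (simp add: e x hplane_def)
  show ?thesis using assms
    by (auto simp: e x h hinv_def hmult_def hdil_def inner_commute algebra_simps inner_diff_right inner_scaleR_right)
qed

lemma ray_hplane:
  assumes "\<eta> \<in> hplane \<xi>0"
  shows "\<xi>0 + s *\<^sub>R (\<eta> - \<xi>0) \<in> hplane \<xi>0"
proof -
  obtain a b c where e: "\<eta> = (a,b,c)" by (cases \<eta>) auto
  obtain a0 b0 c0 where x: "\<xi>0 = (a0,b0,c0)" by (cases \<xi>0) auto
  have h: "c = c0 + 2*(a \<bullet> b0 - a0 \<bullet> b)" using assms by (simp add: e x hplane_def)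
  show ?thesis
    by (auto simp: e x h hplane_def inner_commute algebra_simps inner_diff_right inner_scaleR_right inner_diff_left)
qed

lemma Pr1_ray: "Pr1 (\<xi>0 + s *\<^sub>R (\<eta> - \<xi>0)) - Pr1 \<xi>0 = s *\<^sub>R (Pr1 \<eta> - Pr1 \<xi>0)"
  by (simp add: Pr1_def algebra_simps)

lemma Pr1_neq:
  assumes "\<eta> \<in> hplane \<xi>0" "\<eta> \<noteq> \<xi>0"
  shows "Pr1 \<eta> - Pr1 \<xi>0 \<noteq> 0"
  using assms
  by (cases \<eta>; cases \<xi>0) (auto simp: hplane_def Pr1_def zero_prod_def)

lemma key:
  fixes G0 :: "'n::finite heis set"
  assumes G: "open G0" "convex G0" "\<xi>0 \<in> G0" and eta: "\<eta> \<in> hplane \<xi>0" "\<eta> \<noteq> \<xi>0"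
    and bnd: "\<forall>a\<in>G0 \<inter> hplane \<xi>0. norm (Pr1 a - Pr1 \<xi>0) \<le> B"
  obtains \<tau> where "\<tau> > 0" "\<And>s. 0 \<le> s \<Longrightarrow> s < \<tau> \<Longrightarrow> \<xi>0 + s *\<^sub>R (\<eta> - \<xi>0) \<in> G0"
     "\<xi>0 + \<tau> *\<^sub>R (\<eta> - \<xi>0) \<notin> G0" "\<xi>0 + \<tau> *\<^sub>R (\<eta> - \<xi>0) \<in> closure G0"
     "slice_lambda G0 \<xi>0 \<eta> = 1/\<tau>"
proof -
  define d where "d = \<eta> - \<xi>0"
  define f where "f = (\<lambda>s::real. \<xi>0 + s *\<^sub>R d)"
  define w where "w = Pr1 \<eta> - Pr1 \<xi>0"
  have w0: "w \<noteq> 0" using Pr1_neq[OF eta] by (simp add: w_def)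
  have cf: "\<And>x. continuous (at x) f" unfolding f_def by (intro continuous_intros)
  define S where "S = f -` G0"
  have oS: "open S" unfolding S_def by (rule continuous_open_vimage[OF G(1) cf])
  have fH: "f s \<in> hplane \<xi>0" for s unfolding f_def d_def by (rule ray_hplane[OF eta(1)])
  have nf: "norm (Pr1 (f s) - Pr1 \<xi>0) = \<bar>s\<bar> * norm w" for s
    unfolding f_def d_def w_def by (simp add: Pr1_ray)
  have bS: "bounded S"
    unfolding bounded_real
  proof (intro exI ballI)
    fix s assume "s \<in> S"
    then have "f s \<in> G0 \<inter> hplane \<xi>0" using fH by (auto simp: S_def)
    then have "\<bar>s\<bar> * norm w \<le> B" using bnd nf by metis
    then show "\<bar>s\<bar> \<le> B / norm w" using w0 by (simp add: field_simps)
  qed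
  have "0 \<in> interior S" using G(3) oS by (simp add: interior_open S_def f_def)
  then obtain \<tau> where t: "0 < \<tau>" "0 + \<tau> *\<^sub>R 1 \<in> frontier S"
     "\<And>e. \<lbrakk>0 \<le> e; e < \<tau>\<rbrakk> \<Longrightarrow> 0 + e *\<^sub>R (1::real) \<in> interior S"
    using ray_to_frontier[OF bS, of 0 1] by auto
  have inG: "f s \<in> G0" if "0 \<le> s" "s < \<tau>" for s
    using t(3)[OF that] oS by (simp add: interior_open S_def)
  have tS: "\<tau> \<in> closure S" "\<tau> \<notin> S" using t(2) oS by (auto simp: frontier_def interior_open)
  have "closure S \<subseteq> f -` closure G0"
    by (rule closure_minimal) (auto simp: S_def intro: closure_subset[THEN subsetD] continuous_closed_vimage[OF closed_closure cf])
  then have fcl: "f \<tau> \<in> closure G0" using tS by auto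
  have fnot: "f \<tau> \<notin> G0" using tS by (simp add: S_def)
  have ffr: "f \<tau> \<in> frontier G0" using fcl fnot G(1) by (simp add: frontier_def interior_open)
  have uniq: "s = \<tau>" if "s > 0" "f s \<in> frontier G0" for s
  proof (rule ccontr)
    assume "s \<noteq> \<tau>"
    then consider "s < \<tau>" | "s > \<tau>" by linarith
    then show False
    proof cases
      case 1 then have "f s \<in> G0" using inG that by auto
      then show False using that G(1) by (simp add: frontier_def interior_open)
    next
      case 2
      have "f s \<in> closure G0" using that by (simp add: frontier_def)
      then have seg: "open_segment \<xi>0 (f s) \<subseteq> G0"
        using in_interior_closure_convex_segment[OF G(2), of \<xi>0 "f s"] G by (simp add: interior_open)
      have dn: "d \<noteq> 0" using eta by (simp add: d_def)
      have ne: "\<xi>0 \<noteq> f s" using that dn by (simp add: f_def)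
      have "f \<tau> = (1 - \<tau>/s) *\<^sub>R \<xi>0 + (\<tau>/s) *\<^sub>R f s"
        using that by (simp add: f_def algebra_simps)
      then have "f \<tau> \<in> open_segment \<xi>0 (f s)"
        unfolding in_segment using ne 2 t(1) that by (intro conjI exI[of _ "\<tau>/s"]) auto
      then show False using seg fnot by auto
    qed
  qed
  have dil: "\<xi>0 \<circ>\<^sub>H hdil s (hinv \<xi>0 \<circ>\<^sub>H \<eta>) = f s" for s
    using dil_hplane[OF eta(1)] by (simp add: f_def d_def)
  have bp: "bdry_pt G0 \<xi>0 \<eta> = f \<tau>"
    unfolding bdry_pt_def dil
  proof (rule the_equality)
    show "f \<tau> \<in> frontier G0 \<inter> hplane \<xi>0 \<and> (\<exists>s>0. f \<tau> = f s)" using ffr fH t(1) by auto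
  next
    fix e assume "e \<in> frontier G0 \<inter> hplane \<xi>0 \<and> (\<exists>s>0. e = f s)"
    then show "e = f \<tau>" using uniq by auto
  qed
  have lam: "slice_lambda G0 \<xi>0 \<eta> = 1/\<tau>"
    unfolding slice_lambda_def bp using eta t(1) w0
    by (simp add: gauge_hplane[OF eta(1)] gauge_hplane[OF fH] nf w_def)
  show ?thesis
    using that[OF t(1) _ fnot[unfolded f_def d_def] fcl[unfolded f_def d_def] lam] inG
    unfolding f_def d_def by blast
qed

lemma cone_val:
  assumes "\<xi> \<in> hplane \<xi>0" "cv \<noteq> 0"
  shows "slicing_cone G0 \<xi>0 cv cb \<xi> = cv + (cb - cv) * slice_lambda G0 \<xi>0 \<xi>"
  using assms by (simp add: slicing_cone_def closest_point_self field_simps)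

lemma xi0_hplane: "\<xi>0 \<in> hplane \<xi>0"
  by (cases \<xi>0) (simp add: hplane_def)

lemma lambda0: "slice_lambda G0 \<xi>0 \<xi>0 = 0"
  by (simp add: slice_lambda_def)

theorem proposition3p3:
  fixes \<Omega> G0 :: "'n::finite heis set" and \<xi>0 :: "'n heis" and cv cb :: real
  assumes "open \<Omega>" and "horizontally_bounded \<Omega>"
    and "open G0" and "convex G0" and "G0 \<subseteq> \<Omega>" and "\<xi>0 \<in> G0"
    and "cv < cb" and "cb \<le> 0"
  shows "(ball 0 ((cb - cv) / diamH (G0 \<inter> hplane \<xi>0))
           \<subseteq> horiz_subdiff \<Omega> (slicing_cone G0 \<xi>0 cv cb) \<xi>0)
       \<and> (\<forall>p \<in> interior (horiz_subdiff \<Omega> (slicing_cone G0 \<xi>0 cv cb) \<xi>0).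
           \<forall>\<xi> \<in> (closure G0 \<inter> hplane \<xi>0) - {\<xi>0}.
             slicing_cone G0 \<xi>0 cv cb \<xi> >
               slicing_cone G0 \<xi>0 cv cb \<xi>0 + p \<bullet> (Pr1 \<xi> - Pr1 \<xi>0))"
proof -
  note G = assms(3,4,6)
  define D where "D = diamH (G0 \<inter> hplane \<xi>0)"
  define V where "V = slicing_cone G0 \<xi>0 cv cb"
  have cv0: "cv \<noteq> 0" using assms(7,8) by linarith
  have V0: "V \<xi>0 = cv" using cone_val[OF xi0_hplane cv0] by (simp add: V_def lambda0)
  obtain B where B: "\<forall>\<xi>\<in>\<Omega>. \<forall>a\<in>\<Omega> \<inter> hplane \<xi>. \<forall>b\<in>\<Omega> \<inter> hplane \<xi>. dH a b \<le> B"
    using assms(2) by (auto simp: horizontally_bounded_def)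
  define A where "A = {dH a b | a b. a \<in> G0 \<inter> hplane \<xi>0 \<and> b \<in> G0 \<inter> hplane \<xi>0}"
  have bA: "bdd_above A" unfolding A_def bdd_above_def
    using B assms(5,6) by blast
  have Dbnd: "\<forall>a\<in>G0 \<inter> hplane \<xi>0. norm (Pr1 a - Pr1 \<xi>0) \<le> D"
  proof
    fix a assume a: "a \<in> G0 \<inter> hplane \<xi>0"
    have "dH a \<xi>0 \<in> A" unfolding A_def using a G(3) xi0_hplane by blast
    then have "dH a \<xi>0 \<le> D" using bA by (simp add: D_def diamH_def A_def cSup_upper)
    then show "norm (Pr1 a - Pr1 \<xi>0) \<le> D" using a by (simp add: dH_def gauge_hplane)
  qed
  have D0: "0 \<le> D" using Dbnd G(3) xi0_hplane[of \<xi>0] by (metis IntI norm_ge_zero order_trans)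
  have keyD: "\<tau> * norm (Pr1 \<xi> - Pr1 \<xi>0) \<le> D"
    if \<xi>: "\<xi> \<in> hplane \<xi>0" and t: "\<tau> > 0" "\<And>s. 0 \<le> s \<Longrightarrow> s < \<tau> \<Longrightarrow> \<xi>0 + s *\<^sub>R (\<xi> - \<xi>0) \<in> G0" for \<xi> \<tau>
  proof (rule ccontr)
    define n where "n = norm (Pr1 \<xi> - Pr1 \<xi>0)"
    assume "\<not> ?thesis"
    then have lt: "D < \<tau> * n" by (simp add: n_def)
    have "n \<ge> 0" by (simp add: n_def)
    then have n0: "n > 0" using D0 lt by (cases "n = 0") auto
    define s where "s = (D/n + \<tau>)/2"
    have "D/n < \<tau>" using lt n0 by (simp add: field_simps)
    then have s1: "0 \<le> s" "s < \<tau>" using D0 n0 t(1) by (auto simp: s_def)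
    have "\<xi>0 + s *\<^sub>R (\<xi> - \<xi>0) \<in> G0 \<inter> hplane \<xi>0" using t(2)[OF s1] ray_hplane[OF \<xi>] by auto
    then have "norm (Pr1 (\<xi>0 + s *\<^sub>R (\<xi> - \<xi>0)) - Pr1 \<xi>0) \<le> D" using Dbnd by blast
    then have "\<bar>s\<bar> * n \<le> D" by (simp add: Pr1_ray n_def)
    moreover have "s * n > D" using lt n0 unfolding s_def by (simp add: field_simps)
    ultimately show False using s1 by simp
  qed
  have part1: "ball (0::(real^'n)\<times>(real^'n)) ((cb - cv) / D) \<subseteq> horiz_subdiff \<Omega> V \<xi>0"
  proof
    fix p :: "(real^'n)\<times>(real^'n)" assume p: "p \<in> ball 0 ((cb - cv) / D)"
    have Dp: "D > 0"
    proof (rule ccontr)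
      assume "\<not> D > 0" then have "D = 0" using D0 by simp
      then show False using p by simp
    qed
    have pD: "norm p * D \<le> cb - cv" using p Dp by (simp add: field_simps)
    show "p \<in> horiz_subdiff \<Omega> V \<xi>0"
      unfolding horiz_subdiff_def
    proof (intro CollectI ballI)
      fix \<xi> assume \<xi>: "\<xi> \<in> \<Omega> \<inter> hplane \<xi>0"
      show "V \<xi>0 + p \<bullet> (Pr1 \<xi> - Pr1 \<xi>0) \<le> V \<xi>"
      proof (cases "\<xi> = \<xi>0")
        case True then show ?thesis by simp
      next
        case False
        obtain \<tau> where t: "\<tau> > 0" "\<And>s. 0 \<le> s \<Longrightarrow> s < \<tau> \<Longrightarrow> \<xi>0 + s *\<^sub>R (\<xi> - \<xi>0) \<in> G0"
          "slice_lambda G0 \<xi>0 \<xi> = 1/\<tau>"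
          using key[OF G _ False Dbnd] \<xi> by auto
        define n where "n = norm (Pr1 \<xi> - Pr1 \<xi>0)"
        have tn: "\<tau> * n \<le> D" using keyD[of \<xi> \<tau>] \<xi> t by (auto simp: n_def)
        have "p \<bullet> (Pr1 \<xi> - Pr1 \<xi>0) \<le> norm p * n" by (simp add: n_def norm_cauchy_schwarz)
        also have "norm p * n \<le> (cb - cv) / \<tau>"
        proof -
          have "norm p * (\<tau> * n) \<le> norm p * D" using tn by (simp add: mult_left_mono)
          then have "\<tau> * (norm p * n) \<le> cb - cv" using pD by (simp add: algebra_simps)
          then show ?thesis using t(1) by (simp add: field_simps)
        qed
        finally show ?thesis using \<xi> t(3) V0 cone_val[OF _ cv0, of \<xi> \<xi>0 G0 cb]
          by (simp add: V_def)
      qed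
    qed
  qed
  have part2: "V \<xi> > V \<xi>0 + p \<bullet> (Pr1 \<xi> - Pr1 \<xi>0)"
    if p: "p \<in> interior (horiz_subdiff \<Omega> V \<xi>0)" and \<xi>: "\<xi> \<in> (closure G0 \<inter> hplane \<xi>0) - {\<xi>0}" for p \<xi>
  proof -
    obtain e where e: "e > 0" "ball p e \<subseteq> horiz_subdiff \<Omega> V \<xi>0"
      using p by (meson mem_interior)
    have \<xi>H: "\<xi> \<in> hplane \<xi>0" and ne: "\<xi> \<noteq> \<xi>0" using \<xi> by auto
    obtain \<tau> where t: "\<tau> > 0" "\<And>s. 0 \<le> s \<Longrightarrow> s < \<tau> \<Longrightarrow> \<xi>0 + s *\<^sub>R (\<xi> - \<xi>0) \<in> G0"
          "slice_lambda G0 \<xi>0 \<xi> = 1/\<tau>"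
      using key[OF G \<xi>H ne Dbnd] by auto
    define w where "w = Pr1 \<xi> - Pr1 \<xi>0"
    have w0: "w \<noteq> 0" using Pr1_neq[OF \<xi>H ne] by (simp add: w_def)
    define q where "q = p + (e / 2 / norm w) *\<^sub>R w"
    have "dist p q < e" using e(1) w0 by (simp add: q_def dist_norm)
    then have q: "q \<in> horiz_subdiff \<Omega> V \<xi>0" using e(2) by auto
    define s where "s = \<tau> / 2"
    define \<zeta> where "\<zeta> = \<xi>0 + s *\<^sub>R (\<xi> - \<xi>0)"
    have s: "0 < s" "s < \<tau>" using t(1) by (auto simp: s_def)
    have \<zeta>G: "\<zeta> \<in> G0" using t(2)[of s] s by (simp add: \<zeta>_def)
    have \<zeta>H: "\<zeta> \<in> hplane \<xi>0" using ray_hplane[OF \<xi>H] by (simp add: \<zeta>_def)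
    have \<zeta>w: "Pr1 \<zeta> - Pr1 \<xi>0 = s *\<^sub>R w" by (simp add: \<zeta>_def w_def Pr1_ray)
    have \<zeta>ne: "\<zeta> \<noteq> \<xi>0" using \<zeta>w w0 s by auto
    obtain \<sigma> where sg: "\<sigma> > 0" "\<And>u. 0 \<le> u \<Longrightarrow> u < \<sigma> \<Longrightarrow> \<xi>0 + u *\<^sub>R (\<zeta> - \<xi>0) \<in> G0"
          "\<xi>0 + \<sigma> *\<^sub>R (\<zeta> - \<xi>0) \<notin> G0" "slice_lambda G0 \<xi>0 \<zeta> = 1/\<sigma>"
      using key[OF G \<zeta>H \<zeta>ne Dbnd] by auto
    obtain \<tau>' where t': "\<tau>' > 0" "\<And>s. 0 \<le> s \<Longrightarrow> s < \<tau>' \<Longrightarrow> \<xi>0 + s *\<^sub>R (\<xi> - \<xi>0) \<in> G0"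
          "\<xi>0 + \<tau>' *\<^sub>R (\<xi> - \<xi>0) \<notin> G0" "slice_lambda G0 \<xi>0 \<xi> = 1/\<tau>'"
      using key[OF G \<xi>H ne Dbnd] by auto
    have tt: "\<tau>' = \<tau>" using t(3) t'(4) t(1) t'(1) by simp
    have zr: "\<xi>0 + u *\<^sub>R (\<zeta> - \<xi>0) = \<xi>0 + (u * s) *\<^sub>R (\<xi> - \<xi>0)" for u
      by (simp add: \<zeta>_def)
    have "\<sigma> * s = \<tau>"
    proof (rule ccontr)
      assume "\<sigma> * s \<noteq> \<tau>"
      then consider "\<sigma> * s < \<tau>" | "\<sigma> * s > \<tau>" by linarith
      then show False
      proof cases
        case 1 then show False using t'(2)[of "\<sigma> * s"] sg(1,3) s tt by (simp add: zr)
      next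
        case 2
        have "0 \<le> \<tau>/s" "\<tau>/s < \<sigma>" using 2 s by (auto simp: field_simps)
        from sg(2)[OF this] show False using t'(3) tt s by (simp add: zr)
      qed
    qed
    then have lz: "slice_lambda G0 \<xi>0 \<zeta> = s / \<tau>" using sg(4) s sg(1) by (auto simp: field_simps)
    have "V \<xi>0 + q \<bullet> (Pr1 \<zeta> - Pr1 \<xi>0) \<le> V \<zeta>"
      using q \<zeta>G assms(5) \<zeta>H unfolding horiz_subdiff_def by blast
    then have "cv + s * (q \<bullet> w) \<le> cv + (cb - cv) * (s / \<tau>)"
      using V0 cone_val[OF \<zeta>H cv0, of G0 cb] lz \<zeta>w by (simp add: V_def)
    moreover have "(cb - cv) * (s / \<tau>) = s * ((cb - cv) / \<tau>)" by simp
    ultimately have "s * (q \<bullet> w) \<le> s * ((cb - cv) / \<tau>)" by linarith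
    then have "q \<bullet> w \<le> (cb - cv) / \<tau>" using s(1) mult_le_cancel_left_pos by blast
    moreover have "q \<bullet> w = p \<bullet> w + e / 2 * norm w"
    proof -
      have ww: "w \<bullet> w = norm w * norm w" by (metis power2_norm_eq_inner power2_eq_square)
      have "q \<bullet> w = p \<bullet> w + (e / 2 / norm w) * (norm w * norm w)"
        by (simp add: q_def inner_add_left ww)
      then show ?thesis using w0 by simp
    qed
    ultimately have "p \<bullet> w + e / 2 * norm w \<le> (cb - cv) / \<tau>" by simp
    moreover have "0 < e / 2 * norm w" using e(1) w0 by simp
    ultimately have "p \<bullet> w < (cb - cv) / \<tau>" by linarith
    then show ?thesis
      using V0 cone_val[OF \<xi>H cv0, of G0 cb] t(3) by (simp add: V_def w_def)
  qed
  show ?thesis using part1 part2 by (simp add: D_def V_def)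
qed

end
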